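(* Let $\Omega\subset\mathbb{R}^n$ be a domain, $\mathcal{S}$ any basis of shapes in $\Omega$, $1\le p<\infty$, and $f$ a real-valued function in $\mathrm{BMO}^p_{\mathcal{S}}(\Omega)$. Then for all $k>0$, $T(f,k)\in\mathrm{BMO}^p_{\mathcal{S}}(\Omega)$ and $\|T(f,k)\|_{\mathrm{BMO}^p_{\mathcal{S}}}\le c\|f\|_{\mathrm{BMO}^p_{\mathcal{S}}}$, where $c=1$ if $p=1$ or $p=2$, and $c=\min\big(2,\big(\frac{1+c_{|\cdot|}(p,\mathcal{S})}{2}\big)^2\big)$ otherwise. Moreover, for $p=1$ or $p=2$, $\|T(f,k)\|_{\mathrm{BMO}^p_{\mathcal{S}}}\to\|f\|_{\mathrm{BMO}^p_{\mathcal{S}}}$ as $k\to\infty$.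
   Context: A domain is an open connected set. A shape is an open set with $0<|S|<\infty$; a basis of shapes in $\Omega$ is a collection of shapes contained in $\Omega$ covering $\Omega$. For $f\in L^1(S)$, $f_S=\frac1{|S|}\int_Sf$. $\mathrm{BMO}^p_{\mathcal{S}}(\Omega)$ is the space of $f$ with $f\in L^1(S)$ for all $S\in\mathcal{S}$ and $\|f\|_{\mathrm{BMO}^p_{\mathcal{S}}}:=\sup_{S\in\mathcal{S}}\big(\frac1{|S|}\int_S|f-f_S|^p\big)^{1/p}<\infty$. $c_{|\cdot|}(p,\mathcal{S})$ denotes the smallest constant $c$ such that $\||f|\|_{\mathrm{BMO}^p_{\mathcal{S}}}\le c\|f\|_{\mathrm{BMO}^p_{\mathcal{S}}}$ for all real-valued $f\in\mathrm{BMO}^p_{\mathcal{S}}(\Omega)$ (known to satisfy $1\le c_{|\cdot|}(p,\mathcal{S})\le2$). The truncation at level $k$ is $T(f,k)(x)=k$ if $f(x)>k$, $=f(x)$ if $-k\le f(x)\le k$, $=-k$ if $f(x)<-k$. *)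

theory Defs
  imports "HOL-Analysis.Analysis"
begin

definition domain :: "'a::euclidean_space set \<Rightarrow> bool" where
  "domain \<Omega> \<longleftrightarrow> open \<Omega> \<and> connected \<Omega> \<and> \<Omega> \<noteq> {}"

definition shape :: "'a::euclidean_space set \<Rightarrow> bool" where
  "shape S \<longleftrightarrow> open S \<and> 0 < emeasure lebesgue S \<and> emeasure lebesgue S < \<infinity>"

definition basis_of_shapes :: "'a::euclidean_space set set \<Rightarrow> 'a set \<Rightarrow> bool" where
  "basis_of_shapes \<S> \<Omega> \<longleftrightarrow> (\<forall>S\<in>\<S>. shape S \<and> S \<subseteq> \<Omega>) \<and> \<Union>\<S> = \<Omega>"

definition avg :: "'a::euclidean_space set \<Rightarrow> ('a \<Rightarrow> real) \<Rightarrow> real" where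
  "avg S f = (1 / measure lebesgue S) * (LINT x:S|lebesgue. f x)"

definition osc :: "real \<Rightarrow> 'a::euclidean_space set \<Rightarrow> ('a \<Rightarrow> real) \<Rightarrow> real" where
  "osc p S f = ((1 / measure lebesgue S) *
      (LINT x:S|lebesgue. \<bar>f x - avg S f\<bar> powr p)) powr (1 / p)"

definition in_BMO :: "real \<Rightarrow> 'a::euclidean_space set set \<Rightarrow> ('a \<Rightarrow> real) \<Rightarrow> bool" where
  "in_BMO p \<S> f \<longleftrightarrow>
     (\<forall>S\<in>\<S>. set_integrable lebesgue S f \<and>
              set_integrable lebesgue S (\<lambda>x. \<bar>f x - avg S f\<bar> powr p)) \<and>
     bdd_above ((\<lambda>S. osc p S f) ` \<S>)"

definition BMO_norm :: "real \<Rightarrow> 'a::euclidean_space set set \<Rightarrow> ('a \<Rightarrow> real) \<Rightarrow> real" where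
  "BMO_norm p \<S> f = (SUP S\<in>\<S>. osc p S f)"

definition c_abs :: "real \<Rightarrow> 'a::euclidean_space set set \<Rightarrow> real" where
  "c_abs p \<S> = Inf {c. \<forall>f. in_BMO p \<S> f \<longrightarrow>
       in_BMO p \<S> (\<lambda>x. \<bar>f x\<bar>) \<and> BMO_norm p \<S> (\<lambda>x. \<bar>f x\<bar>) \<le> c * BMO_norm p \<S> f}"

definition trunc :: "('a \<Rightarrow> real) \<Rightarrow> real \<Rightarrow> 'a \<Rightarrow> real" where
  "trunc f k x = (if f x > k then k else if f x < - k then - k else f x)"

end

theory Submission
  imports Defs
begin


definition av :: "'a measure \<Rightarrow> ('a \<Rightarrow> real) \<Rightarrow> real" where
  "av M g = integral\<^sup>L M g / measure M (space M)"
definition pm :: "'a measure \<Rightarrow> real \<Rightarrow> ('a \<Rightarrow> real) \<Rightarrow> real" where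
  "pm M p g = av M (\<lambda>x. \<bar>g x\<bar> powr p)"
definition nrm :: "'a measure \<Rightarrow> real \<Rightarrow> ('a \<Rightarrow> real) \<Rightarrow> real" where
  "nrm M p g = (pm M p g) powr (1/p)"
definition Lp :: "'a measure \<Rightarrow> real \<Rightarrow> ('a \<Rightarrow> real) \<Rightarrow> bool" where
  "Lp M p g \<longleftrightarrow> g \<in> borel_measurable M \<and> integrable M (\<lambda>x. \<bar>g x\<bar> powr p)"

lemma abs_conv_powr:
  fixes a b l p :: real
  assumes l: "0 \<le> l" "l \<le> 1" and p: "1 \<le> p"
  shows "\<bar>l * a + (1 - l) * b\<bar> powr p \<le> l * \<bar>a\<bar> powr p + (1 - l) * \<bar>b\<bar> powr p"
proof -
  have "\<bar>l * a + (1 - l) * b\<bar> \<le> \<bar>l * a\<bar> + \<bar>(1 - l) * b\<bar>" by (rule abs_triangle_ineq)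
  also have "\<dots> = l * \<bar>a\<bar> + (1 - l) * \<bar>b\<bar>" using l by (simp add: abs_mult)
  finally have "\<bar>l * a + (1 - l) * b\<bar> \<le> l * \<bar>a\<bar> + (1 - l) * \<bar>b\<bar>" .
  then have 1: "\<bar>l * a + (1 - l) * b\<bar> powr p \<le> (l * \<bar>a\<bar> + (1 - l) * \<bar>b\<bar>) powr p"
    using p by (intro powr_mono2) auto
  have 2: "(l * \<bar>a\<bar> + (1 - l) * \<bar>b\<bar>) powr p \<le> l * \<bar>a\<bar> powr p + (1 - l) * \<bar>b\<bar> powr p"
  proof (cases "\<bar>a\<bar> = 0 \<or> \<bar>b\<bar> = 0")
    case True
    have le: "t powr p \<le> t" if "0 \<le> t" "t \<le> 1" for t :: real
    proof (cases "t = 0")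
      case False
      then have "t powr p \<le> t powr 1" using that p by (intro powr_mono') auto
      then show ?thesis using that by simp
    qed simp
    show ?thesis
    proof (cases "\<bar>a\<bar> = 0")
      case True
      then have "((1 - l) * \<bar>b\<bar>) powr p = (1 - l) powr p * \<bar>b\<bar> powr p"
        using l by (simp add: powr_mult)
      also have "\<dots> \<le> (1 - l) * \<bar>b\<bar> powr p"
        using l le[of "1 - l"] by (intro mult_right_mono) auto
      finally show ?thesis using True p by simp
    next
      case False
      with True have b: "\<bar>b\<bar> = 0" by simp
      have "(l * \<bar>a\<bar>) powr p = l powr p * \<bar>a\<bar> powr p"
        using l by (simp add: powr_mult)
      also have "\<dots> \<le> l * \<bar>a\<bar> powr p"
        using l le[of "l"] by (intro mult_right_mono) auto
      finally show ?thesis using b p by simp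
    qed
  next
    case False
    then have ab: "\<bar>a\<bar> \<in> {0<..}" "\<bar>b\<bar> \<in> {0<..}" by auto
    show ?thesis
      using convex_onD[OF powr_convex[OF p], of "1 - l" "\<bar>a\<bar>" "\<bar>b\<bar>"] ab l
      by (simp add: algebra_simps)
  qed
  show ?thesis using 1 2 by linarith
qed

lemma powr_tangent:
  fixes m t p :: real
  assumes m: "0 < m" and t: "0 \<le> t" and p: "1 \<le> p"
  shows "m powr p + p * m powr (p - 1) * (t - m) \<le> t powr p"
proof (cases "t = 0")
  case True
  have e: "m powr (p - 1) * m = m powr p" using powr_mult_base[of m "p - 1"] m by (simp add: mult.commute)
  have "p * m powr (p - 1) * (t - m) = - p * (m powr (p - 1) * m)" using True by (simp add: algebra_simps)
  also have "\<dots> = - p * m powr p" using e by simp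
  finally have "m powr p + p * m powr (p - 1) * (t - m) = (1 - p) * m powr p" by (simp add: algebra_simps)
  moreover have "(1 - p) * m powr p \<le> 0" using p by (simp add: mult_nonpos_nonneg)
  ultimately show ?thesis using True by simp
next
  case False
  have "p * m powr (p - 1) * (t - m) \<le> t powr p - m powr p"
    using m t False p
    by (intro convex_on_imp_above_tangent[where A = "{0<..}"] powr_convex)
       (auto intro!: derivative_eq_intros simp: interior_open)
  then show ?thesis by simp
qed

lemma abs_le_powr: "1 \<le> p \<Longrightarrow> \<bar>t::real\<bar> \<le> 1 + \<bar>t\<bar> powr p"
proof (cases "\<bar>t\<bar> \<le> 1")
  case False
  assume p: "1 \<le> p"
  then have "\<bar>t\<bar> powr 1 \<le> \<bar>t\<bar> powr p" using False by (intro powr_mono) auto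
  then show ?thesis using False by simp
qed (use powr_ge_zero[of "\<bar>t\<bar>" p] in linarith)



locale avsp = finite_measure M for M :: "'a measure" +
  fixes p :: real
  assumes pos: "0 < measure M (space M)" and p1: "1 \<le> p"
begin

abbreviation "mu \<equiv> measure M (space M)"

lemma av_const[simp]: "av M (\<lambda>x. c) = c"
  using pos by (simp add: av_def)

lemma av_add: "integrable M g \<Longrightarrow> integrable M h \<Longrightarrow> av M (\<lambda>x. g x + h x) = av M g + av M h"
  by (simp add: av_def add_divide_distrib)

lemma av_diff: "integrable M g \<Longrightarrow> integrable M h \<Longrightarrow> av M (\<lambda>x. g x - h x) = av M g - av M h"
  by (simp add: av_def diff_divide_distrib)

lemma av_cmult: "av M (\<lambda>x. c * g x) = c * av M g"
  by (simp add: av_def)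

lemma av_minus: "av M (\<lambda>x. - g x) = - av M g"
  by (simp add: av_def)

lemma av_mono: "integrable M g \<Longrightarrow> integrable M h \<Longrightarrow> (\<And>x. x \<in> space M \<Longrightarrow> g x \<le> h x) \<Longrightarrow> av M g \<le> av M h"
  unfolding av_def using pos by (intro divide_right_mono integral_mono) auto

lemma av_nonneg: "(\<And>x. x \<in> space M \<Longrightarrow> 0 \<le> g x) \<Longrightarrow> 0 \<le> av M g"
  unfolding av_def using pos by (intro divide_nonneg_pos integral_nonneg_AE) auto

lemma av_abs: "\<bar>av M g\<bar> \<le> av M (\<lambda>x. \<bar>g x\<bar>)"
  unfolding av_def using pos integral_abs_bound[of M g]
  by (simp add: abs_divide divide_right_mono)

lemma pm_nonneg: "0 \<le> pm M p g"
  unfolding pm_def by (rule av_nonneg) simp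

lemma nrm_nonneg: "0 \<le> nrm M p g"
  unfolding nrm_def by simp

lemma nrm_pow: "nrm M p g powr p = pm M p g"
  unfolding nrm_def using pm_nonneg p1 by (simp add: powr_powr)

lemma Lp_integrable: assumes "Lp M p g" shows "integrable M g"
proof -
  have "integrable M (\<lambda>x. 1 + \<bar>g x\<bar> powr p)" using assms unfolding Lp_def by auto
  then show ?thesis
    by (rule Bochner_Integration.integrable_bound) (use assms p1 abs_le_powr in \<open>auto simp: Lp_def\<close>)
qed

lemma Lp_mono:
  assumes h: "Lp M p h" and g: "g \<in> borel_measurable M"
    and le: "\<And>x. x \<in> space M \<Longrightarrow> \<bar>g x\<bar> \<le> \<bar>h x\<bar>"
  shows "Lp M p g" and "nrm M p g \<le> nrm M p h"
proof -
  have le2: "\<And>x. x \<in> space M \<Longrightarrow> \<bar>g x\<bar> powr p \<le> \<bar>h x\<bar> powr p"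
    using le p1 by (intro powr_mono2) auto
  show L: "Lp M p g" unfolding Lp_def
  proof
    show "integrable M (\<lambda>x. \<bar>g x\<bar> powr p)"
      by (rule Bochner_Integration.integrable_bound[of _ "\<lambda>x. \<bar>h x\<bar> powr p"])
         (use h g le2 in \<open>auto simp: Lp_def\<close>)
  qed (rule g)
  have "pm M p g \<le> pm M p h"
    unfolding pm_def by (rule av_mono) (use L h le2 in \<open>auto simp: Lp_def\<close>)
  then show "nrm M p g \<le> nrm M p h"
    unfolding nrm_def using p1 pm_nonneg by (intro powr_mono2) auto
qed

lemma Lp_const: "Lp M p (\<lambda>x. c)"
  unfolding Lp_def by auto

lemma nrm_const: "nrm M p (\<lambda>x. c) = \<bar>c\<bar>"
  unfolding nrm_def pm_def using p1 by (simp add: powr_powr)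

lemma Lp_cmult: "Lp M p g \<Longrightarrow> Lp M p (\<lambda>x. c * g x)"
  unfolding Lp_def by (auto simp: abs_mult powr_mult)

lemma nrm_cmult: "nrm M p (\<lambda>x. c * g x) = \<bar>c\<bar> * nrm M p g"
proof -
  have "pm M p (\<lambda>x. c * g x) = \<bar>c\<bar> powr p * pm M p g"
    unfolding pm_def by (simp add: abs_mult powr_mult av_cmult)
  then show ?thesis
    unfolding nrm_def using pm_nonneg p1 by (simp add: powr_mult powr_powr)
qed

lemma Lp_add: assumes g: "Lp M p g" and h: "Lp M p h" shows "Lp M p (\<lambda>x. g x + h x)"
  unfolding Lp_def
proof
  show "(\<lambda>x. g x + h x) \<in> borel_measurable M" using g h by (auto simp: Lp_def)
  have b: "\<bar>g x + h x\<bar> powr p \<le> 2 powr p * ((1/2) * \<bar>g x\<bar> powr p + (1 - 1/2) * \<bar>h x\<bar> powr p)" for x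
  proof -
    have e1: "\<bar>g x + h x\<bar> = 2 * \<bar>(g x + h x) / 2\<bar>" by simp
    have e2: "(g x + h x) / 2 = (1/2) * g x + (1 - 1/2) * h x" by (simp add: field_simps)
    have "\<bar>g x + h x\<bar> = 2 * \<bar>(1/2) * g x + (1 - 1/2) * h x\<bar>" using e1 e2 by metis
    then have "\<bar>g x + h x\<bar> powr p = (2 * \<bar>(1/2) * g x + (1 - 1/2) * h x\<bar>) powr p" by simp
    also have "\<dots> = 2 powr p * \<bar>(1/2) * g x + (1 - 1/2) * h x\<bar> powr p" by (simp add: powr_mult)
    also have "\<dots> \<le> 2 powr p * ((1/2) * \<bar>g x\<bar> powr p + (1 - 1/2) * \<bar>h x\<bar> powr p)"
      using abs_conv_powr[of "1/2" p "g x" "h x"] p1 by (intro mult_left_mono) auto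
    finally show ?thesis .
  qed
  show "integrable M (\<lambda>x. \<bar>g x + h x\<bar> powr p)"
    by (rule Bochner_Integration.integrable_bound[of _ "\<lambda>x. 2 powr p * ((1/2) * \<bar>g x\<bar> powr p + (1 - 1/2) * \<bar>h x\<bar> powr p)"])
       (use g h b in \<open>auto simp: Lp_def\<close>)
qed

lemma Lp_minus: "Lp M p g \<Longrightarrow> Lp M p (\<lambda>x. - g x)"
  unfolding Lp_def by auto

lemma Lp_diff: "Lp M p g \<Longrightarrow> Lp M p h \<Longrightarrow> Lp M p (\<lambda>x. g x - h x)"
  using Lp_add[of g "\<lambda>x. - h x"] Lp_minus[of h] by simp

end


context avsp begin

lemma minkowski:
  assumes g: "Lp M p g" and h: "Lp M p h"
  shows "nrm M p (\<lambda>x. g x + h x) \<le> nrm M p g + nrm M p h"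
proof -
  have key: "nrm M p (\<lambda>x. g x + h x) \<le> A + B"
    if A: "0 < A" "pm M p g \<le> A powr p" and B: "0 < B" "pm M p h \<le> B powr p" for A B
  proof -
    define l where "l = A / (A + B)"
    have l: "0 \<le> l" "l \<le> 1" "1 - l = B / (A + B)" using A B by (auto simp: l_def field_simps)
    define \<alpha> where "\<alpha> = (A + B) powr p * l / A powr p"
    define \<beta> where "\<beta> = (A + B) powr p * (1 - l) / B powr p"
    have ab: "0 \<le> \<alpha>" "0 \<le> \<beta>" unfolding \<alpha>_def \<beta>_def
      using l(1,2) by (auto intro!: divide_nonneg_nonneg mult_nonneg_nonneg)
    have pw: "\<bar>g x + h x\<bar> powr p \<le> \<alpha> * \<bar>g x\<bar> powr p + \<beta> * \<bar>h x\<bar> powr p" for x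
    proof -
      have e1: "(A + B) * (l * (g x / A)) = g x" using A B by (simp add: l_def)
      have e2: "(A + B) * ((1 - l) * (h x / B)) = h x" using A B l(3) by simp
      have "g x + h x = (A + B) * (l * (g x / A) + (1 - l) * (h x / B))"
        using e1 e2 by (simp add: distrib_left)
      then have "\<bar>g x + h x\<bar> powr p = (A + B) powr p * \<bar>l * (g x / A) + (1 - l) * (h x / B)\<bar> powr p"
        using A B by (simp add: abs_mult powr_mult)
      also have "\<dots> \<le> (A + B) powr p * (l * \<bar>g x / A\<bar> powr p + (1 - l) * \<bar>h x / B\<bar> powr p)"
        by (intro mult_left_mono abs_conv_powr l p1) auto
      also have "\<dots> = \<alpha> * \<bar>g x\<bar> powr p + \<beta> * \<bar>h x\<bar> powr p"
        using A B by (simp add: \<alpha>_def \<beta>_def abs_divide powr_divide field_simps)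
      finally show ?thesis .
    qed
    have ig: "integrable M (\<lambda>x. \<bar>g x\<bar> powr p)" and ih: "integrable M (\<lambda>x. \<bar>h x\<bar> powr p)"
      using g h by (auto simp: Lp_def)
    have "pm M p (\<lambda>x. g x + h x) \<le> av M (\<lambda>x. \<alpha> * \<bar>g x\<bar> powr p + \<beta> * \<bar>h x\<bar> powr p)"
      unfolding pm_def
      by (rule av_mono) (use Lp_add[OF g h] ig ih pw in \<open>auto simp: Lp_def\<close>)
    also have "\<dots> = \<alpha> * pm M p g + \<beta> * pm M p h"
      using ig ih by (simp add: av_add av_cmult pm_def)
    also have "\<dots> \<le> \<alpha> * A powr p + \<beta> * B powr p"
      using ab A B by (intro add_mono mult_left_mono) auto
    also have "\<dots> = (A + B) powr p * (l + (1 - l))"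
      using A B by (simp add: \<alpha>_def \<beta>_def field_simps)
    also have "\<dots> = (A + B) powr p" by simp
    finally have "pm M p (\<lambda>x. g x + h x) \<le> (A + B) powr p" .
    then have "pm M p (\<lambda>x. g x + h x) powr (1/p) \<le> ((A + B) powr p) powr (1/p)"
      using pm_nonneg p1 by (intro powr_mono2) auto
    also have "\<dots> = A + B" using A B p1 by (simp add: powr_powr)
    finally show ?thesis unfolding nrm_def .
  qed
  show ?thesis
  proof (rule field_le_epsilon)
    fix e :: real assume e: "0 < e"
    have "pm M p g \<le> (nrm M p g + e/2) powr p"
      unfolding nrm_pow[symmetric] using e p1 nrm_nonneg by (intro powr_mono2) auto
    moreover have "pm M p h \<le> (nrm M p h + e/2) powr p"
      unfolding nrm_pow[symmetric] using e p1 nrm_nonneg by (intro powr_mono2) auto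
    ultimately have "nrm M p (\<lambda>x. g x + h x) \<le> (nrm M p g + e/2) + (nrm M p h + e/2)"
      using e nrm_nonneg[of g] nrm_nonneg[of h] by (intro key) auto
    then show "nrm M p (\<lambda>x. g x + h x) \<le> nrm M p g + nrm M p h + e" by simp
  qed
qed

lemma jensen:
  assumes g: "Lp M p g"
  shows "\<bar>av M g\<bar> \<le> nrm M p g"
proof -
  define m where "m = av M (\<lambda>x. \<bar>g x\<bar>)"
  have am: "\<bar>av M g\<bar> \<le> m" unfolding m_def by (rule av_abs)
  have ig: "integrable M (\<lambda>x. \<bar>g x\<bar>)" using Lp_integrable[OF g] by auto
  have igp: "integrable M (\<lambda>x. \<bar>g x\<bar> powr p)" using g by (auto simp: Lp_def)
  show ?thesis
  proof (cases "m \<le> 0")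
    case True then show ?thesis using am nrm_nonneg[of g] by linarith
  next
    case False
    then have m: "0 < m" by simp
    define c where "c = m powr p - p * m powr (p - 1) * m"
    define d where "d = p * m powr (p - 1)"
    have "av M (\<lambda>x. c + d * \<bar>g x\<bar>) \<le> av M (\<lambda>x. \<bar>g x\<bar> powr p)"
    proof (rule av_mono)
      fix x
      show "c + d * \<bar>g x\<bar> \<le> \<bar>g x\<bar> powr p"
        using powr_tangent[OF m _ p1, of "\<bar>g x\<bar>"] by (simp add: c_def d_def algebra_simps)
    qed (use ig igp in auto)
    moreover have "av M (\<lambda>x. c + d * \<bar>g x\<bar>) = m powr p"
      using ig by (simp add: av_add av_cmult c_def d_def m_def)
    ultimately have "m powr p \<le> pm M p g" by (simp add: pm_def)
    then have "(m powr p) powr (1/p) \<le> nrm M p g"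
      unfolding nrm_def using m p1 by (intro powr_mono2) auto
    then have "m \<le> nrm M p g" using m p1 by (simp add: powr_powr)
    then show ?thesis using am by linarith
  qed
qed

lemma Lp_of_osc:
  assumes "integrable M f" "Lp M p (\<lambda>x. f x - av M f)"
  shows "Lp M p f"
  using Lp_add[OF assms(2) Lp_const[of "av M f"]] by simp

lemma nrm_osc_le2:
  assumes "Lp M p g"
  shows "nrm M p (\<lambda>x. g x - av M g) \<le> 2 * nrm M p g"
proof -
  have "nrm M p (\<lambda>x. g x + (- av M g)) \<le> nrm M p g + nrm M p (\<lambda>x. - av M g)"
    by (rule minkowski[OF assms Lp_const])
  also have "\<dots> \<le> 2 * nrm M p g" using jensen[OF assms] by (simp add: nrm_const)
  finally show ?thesis by simp
qed

lemma lip_osc: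
  assumes f: "integrable M f" "Lp M p (\<lambda>x. f x - av M f)"
    and \<phi>: "\<And>a b. \<bar>\<phi> a - \<phi> b\<bar> \<le> \<bar>a - b\<bar>" and \<phi>c: "continuous_on UNIV \<phi>"
  shows "integrable M (\<lambda>x. \<phi> (f x))"
    and "Lp M p (\<lambda>x. \<phi> (f x) - av M (\<lambda>x. \<phi> (f x)))"
    and "nrm M p (\<lambda>x. \<phi> (f x) - av M (\<lambda>x. \<phi> (f x))) \<le> 2 * nrm M p (\<lambda>x. f x - av M f)"
proof -
  define a where "a = \<phi> (av M f)"
  have meas: "(\<lambda>x. \<phi> (f x)) \<in> borel_measurable M"
    using borel_measurable_continuous_on[OF \<phi>c] f by auto
  have L1: "Lp M p (\<lambda>x. \<phi> (f x) - a)" and n1: "nrm M p (\<lambda>x. \<phi> (f x) - a) \<le> nrm M p (\<lambda>x. f x - av M f)"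
    using Lp_mono[OF f(2), of "\<lambda>x. \<phi> (f x) - a"] meas \<phi> by (auto simp: a_def)
  have i1: "integrable M (\<lambda>x. \<phi> (f x) - a)" by (rule Lp_integrable[OF L1])
  then have i2: "integrable M (\<lambda>x. \<phi> (f x))"
    using Bochner_Integration.integrable_add[OF i1 integrable_const[of a]] by simp
  show "integrable M (\<lambda>x. \<phi> (f x))" by (rule i2)
  have eq: "(\<lambda>x. \<phi> (f x) - av M (\<lambda>x. \<phi> (f x))) = (\<lambda>x. (\<phi> (f x) - a) + (a - av M (\<lambda>x. \<phi> (f x))))"
    by auto
  show "Lp M p (\<lambda>x. \<phi> (f x) - av M (\<lambda>x. \<phi> (f x)))"
    unfolding eq by (rule Lp_add[OF L1 Lp_const])
  have "a - av M (\<lambda>x. \<phi> (f x)) = - av M (\<lambda>x. \<phi> (f x) - a)"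
    using av_diff[OF i2 integrable_const[of a]] by simp
  then have "\<bar>a - av M (\<lambda>x. \<phi> (f x))\<bar> \<le> nrm M p (\<lambda>x. \<phi> (f x) - a)"
    using jensen[OF L1] by simp
  then have "nrm M p (\<lambda>x. \<phi> (f x) - av M (\<lambda>x. \<phi> (f x))) \<le> 2 * nrm M p (\<lambda>x. \<phi> (f x) - a)"
    unfolding eq using minkowski[OF L1 Lp_const[of "a - av M (\<lambda>x. \<phi> (f x))"]]
    by (simp add: nrm_const)
  then show "nrm M p (\<lambda>x. \<phi> (f x) - av M (\<lambda>x. \<phi> (f x))) \<le> 2 * nrm M p (\<lambda>x. f x - av M f)"
    using n1 by linarith
qed

end


lemma trunc_alt: "0 \<le> k \<Longrightarrow> trunc f k x = - min (- min (f x) k) k"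
  unfolding trunc_def by auto

lemma trunc_lip: "0 \<le> k \<Longrightarrow> \<bar>trunc f k x - trunc f k y\<bar> \<le> \<bar>f x - f y\<bar>"
  unfolding trunc_def by auto

lemma trunc_meas:
  assumes [measurable]: "f \<in> borel_measurable M"
  shows "trunc f k \<in> borel_measurable M"
  unfolding trunc_def[abs_def] by measurable

context avsp begin

lemma osc1_id:
  assumes g: "integrable M g"
  shows "av M (\<lambda>x. \<bar>g x - av M g\<bar>) = 2 * av M (\<lambda>x. max 0 (av M g - g x))"
proof -
  have i1: "integrable M (\<lambda>x. g x - av M g)" using g by auto
  have i2: "integrable M (\<lambda>x. max 0 (av M g - g x))" using g by auto
  have "av M (\<lambda>x. \<bar>g x - av M g\<bar>) = av M (\<lambda>x. (g x - av M g) + 2 * max 0 (av M g - g x))"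
    by (rule arg_cong[where f = "av M"]) (auto simp: fun_eq_iff max_def abs_if)
  also have "\<dots> = av M (\<lambda>x. g x - av M g) + 2 * av M (\<lambda>x. max 0 (av M g - g x))"
    using i1 i2 by (simp add: av_add av_cmult)
  also have "av M (\<lambda>x. g x - av M g) = 0" using g by (simp add: av_diff)
  finally show ?thesis by simp
qed

lemma osc1_min:
  assumes f: "integrable M f"
  shows "av M (\<lambda>x. \<bar>min (f x) k - av M (\<lambda>x. min (f x) k)\<bar>) \<le> av M (\<lambda>x. \<bar>f x - av M f\<bar>)"
proof -
  define h where "h = (\<lambda>x. min (f x) k)"
  have ih: "integrable M h" using f by (auto simp: h_def)
  have a1: "av M h \<le> av M f" by (rule av_mono) (use ih f in \<open>auto simp: h_def\<close>)
  have a2: "av M h \<le> k" using av_mono[OF ih integrable_const[of k]] by (auto simp: h_def)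
  have "av M (\<lambda>x. max 0 (av M h - h x)) \<le> av M (\<lambda>x. max 0 (av M f - f x))"
  proof (rule av_mono)
    fix x
    show "max 0 (av M h - h x) \<le> max 0 (av M f - f x)"
    proof (cases "h x < av M h")
      case True
      then have "h x = f x" using a2 by (auto simp: h_def)
      then show ?thesis using a1 by auto
    qed auto
  qed (use ih f in auto)
  then have "av M (\<lambda>x. \<bar>h x - av M h\<bar>) \<le> av M (\<lambda>x. \<bar>f x - av M f\<bar>)"
    using osc1_id[OF ih] osc1_id[OF f] by simp
  then show ?thesis by (simp add: h_def)
qed

lemma osc1_minus:
  assumes g: "integrable M g"
  shows "av M (\<lambda>x. \<bar>- g x - av M (\<lambda>x. - g x)\<bar>) = av M (\<lambda>x. \<bar>g x - av M g\<bar>)"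
  by (simp add: av_minus abs_minus_commute) 

lemma osc1_trunc:
  assumes f: "integrable M f" and k: "0 \<le> k"
  shows "av M (\<lambda>x. \<bar>trunc f k x - av M (trunc f k)\<bar>) \<le> av M (\<lambda>x. \<bar>f x - av M f\<bar>)"
proof -
  define h where "h = (\<lambda>x. - min (f x) k)"
  have ih: "integrable M h" using f by (auto simp: h_def)
  have e: "trunc f k = (\<lambda>x. - min (h x) k)" using k by (auto simp: h_def trunc_alt fun_eq_iff)
  have "av M (\<lambda>x. \<bar>trunc f k x - av M (trunc f k)\<bar>) = av M (\<lambda>x. \<bar>min (h x) k - av M (\<lambda>x. min (h x) k)\<bar>)"
    unfolding e using osc1_minus[of "\<lambda>x. min (h x) k"] ih by auto
  also have "\<dots> \<le> av M (\<lambda>x. \<bar>h x - av M h\<bar>)" by (rule osc1_min[OF ih])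
  also have "\<dots> = av M (\<lambda>x. \<bar>min (f x) k - av M (\<lambda>x. min (f x) k)\<bar>)"
    unfolding h_def using osc1_minus[of "\<lambda>x. min (f x) k"] f by auto
  also have "\<dots> \<le> av M (\<lambda>x. \<bar>f x - av M f\<bar>)" by (rule osc1_min[OF f])
  finally show ?thesis .
qed

lemma var_min:
  assumes p2: "p = 2" and g: "Lp M p g"
  shows "pm M p (\<lambda>x. g x - av M g) \<le> pm M p (\<lambda>x. g x - a)"
proof -
  define u where "u = (\<lambda>x. g x - av M g)"
  define c where "c = av M g - a"
  have Lu: "Lp M p u" unfolding u_def by (rule Lp_diff[OF g Lp_const])
  have iu: "integrable M u" by (rule Lp_integrable[OF Lu])
  have iu2: "integrable M (\<lambda>x. (u x)\<^sup>2)" using Lu p2 by (simp add: Lp_def)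
  have au: "av M u = 0" unfolding u_def using Lp_integrable[OF g] by (simp add: av_diff)
  have "pm M p (\<lambda>x. g x - a) = av M (\<lambda>x. (u x)\<^sup>2 + (2 * c * u x + c\<^sup>2))"
    unfolding pm_def p2 by (rule arg_cong[where f = "av M"]) (auto simp: fun_eq_iff u_def c_def power2_eq_square algebra_simps)
  also have "\<dots> = av M (\<lambda>x. (u x)\<^sup>2) + (2 * c * av M u + c\<^sup>2)"
    using iu iu2 by (simp add: av_add av_cmult)
  also have "\<dots> \<ge> av M (\<lambda>x. (u x)\<^sup>2)" using au by simp
  finally show ?thesis unfolding pm_def p2 u_def by simp
qed

lemma lip2:
  assumes p2: "p = 2" and f: "integrable M f" "Lp M p (\<lambda>x. f x - av M f)"
    and \<phi>: "\<And>a b. \<bar>\<phi> a - \<phi> b\<bar> \<le> \<bar>a - b\<bar>" and \<phi>c: "continuous_on UNIV \<phi>"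
  shows "nrm M p (\<lambda>x. \<phi> (f x) - av M (\<lambda>x. \<phi> (f x))) \<le> nrm M p (\<lambda>x. f x - av M f)"
proof -
  define a where "a = \<phi> (av M f)"
  have meas: "(\<lambda>x. \<phi> (f x)) \<in> borel_measurable M"
    using borel_measurable_continuous_on[OF \<phi>c] f by auto
  have L1: "Lp M p (\<lambda>x. \<phi> (f x) - a)" and n1: "nrm M p (\<lambda>x. \<phi> (f x) - a) \<le> nrm M p (\<lambda>x. f x - av M f)"
    using Lp_mono[OF f(2), of "\<lambda>x. \<phi> (f x) - a"] meas \<phi> by (auto simp: a_def)
  have L2: "Lp M p (\<lambda>x. \<phi> (f x))" using Lp_add[OF L1 Lp_const[of a]] by simp
  have "pm M p (\<lambda>x. \<phi> (f x) - av M (\<lambda>x. \<phi> (f x))) \<le> pm M p (\<lambda>x. \<phi> (f x) - a)"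
    by (rule var_min[OF p2 L2])
  then have "nrm M p (\<lambda>x. \<phi> (f x) - av M (\<lambda>x. \<phi> (f x))) \<le> nrm M p (\<lambda>x. \<phi> (f x) - a)"
    unfolding nrm_def using pm_nonneg p1 by (intro powr_mono2) auto
  then show ?thesis using n1 by linarith
qed

lemma trunc_tendsto:
  assumes f: "Lp M p f"
  shows "((\<lambda>k. nrm M p (\<lambda>x. f x - trunc f k x)) \<longlongrightarrow> 0) at_top"
proof -
  have fm[measurable]: "f \<in> borel_measurable M" using f by (simp add: Lp_def)
  have [measurable]: "trunc f k \<in> borel_measurable M" for k by (rule trunc_meas[OF fm])
  have "((\<lambda>k. integral\<^sup>L M (\<lambda>x. \<bar>f x - trunc f k x\<bar> powr p)) \<longlongrightarrow> integral\<^sup>L M (\<lambda>x. 0)) at_top"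
  proof (rule integral_dominated_convergence_at_top[where w = "\<lambda>x. \<bar>f x\<bar> powr p"])
    show "integrable M (\<lambda>x. \<bar>f x\<bar> powr p)" using f by (simp add: Lp_def)
    show "AE x in M. ((\<lambda>k. \<bar>f x - trunc f k x\<bar> powr p) \<longlongrightarrow> 0) at_top"
    proof (intro AE_I2 tendsto_eventually)
      fix x
      show "\<forall>\<^sub>F k in at_top. \<bar>f x - trunc f k x\<bar> powr p = 0"
        using eventually_ge_at_top[of "\<bar>f x\<bar>"] by eventually_elim (auto simp: trunc_def)
    qed
    show "\<forall>\<^sub>F k in at_top. AE x in M. norm (\<bar>f x - trunc f k x\<bar> powr p) \<le> \<bar>f x\<bar> powr p"
      using eventually_ge_at_top[of "0::real"]
    proof eventually_elim
      case (elim k)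
      show ?case
      proof (intro AE_I2)
        fix x
        have "\<bar>f x - trunc f k x\<bar> \<le> \<bar>f x\<bar>" using elim by (auto simp: trunc_def)
        then show "norm (\<bar>f x - trunc f k x\<bar> powr p) \<le> \<bar>f x\<bar> powr p"
          using p1 by (simp add: powr_mono2)
      qed
    qed
  qed auto
  note lim = this
  have "((\<lambda>k. pm M p (\<lambda>x. f x - trunc f k x)) \<longlongrightarrow> 0) at_top"
    unfolding pm_def av_def using tendsto_divide[OF lim tendsto_const[of mu]] pos by simp
  then show ?thesis
    unfolding nrm_def using p1 pm_nonneg
    by (intro tendsto_zero_powrI) auto
qed

end


abbreviation MS :: "'a::euclidean_space set \<Rightarrow> 'a measure" where
  "MS S \<equiv> restrict_space lebesgue S"

lemma shape_sets: "shape S \<Longrightarrow> S \<in> sets lebesgue"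
  unfolding shape_def using borel_open[of S] by (auto simp: sets_completionI_sets)

lemma shape_space[simp]: "shape S \<Longrightarrow> space (MS S) = S"
  using shape_sets by auto

lemma shape_sets': "shape S \<Longrightarrow> S \<inter> space lebesgue \<in> sets lebesgue"
  using shape_sets by simp

lemma shape_measure: "shape S \<Longrightarrow> measure (MS S) (space (MS S)) = measure lebesgue S"
  using measure_restrict_space[OF shape_sets' subset_refl, of S] by simp

lemma shape_avsp:
  assumes S: "shape S" and p: "1 \<le> p"
  shows "avsp (MS S) p"
proof -
  have e: "emeasure (MS S) (space (MS S)) = emeasure lebesgue S"
    using shape_sets[OF S] by (simp add: emeasure_restrict_space)
  have fm: "finite_measure (MS S)"
    by (rule finite_measureI) (use e S in \<open>auto simp: shape_def\<close>)
  have h: "0 < emeasure lebesgue S" "emeasure lebesgue S < \<infinity>" using S unfolding shape_def by blast+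
  have "0 < measure lebesgue S"
    unfolding measure_def using h enn2real_positive_iff[of "emeasure lebesgue S"]
    by (simp add: infinity_ennreal_def)
  then show ?thesis
    using fm p shape_measure[OF S] by (simp add: avsp_def avsp_axioms_def)
qed

lemma shape_integrable:
  fixes g :: "'a::euclidean_space \<Rightarrow> real"
  assumes "shape S" shows "set_integrable lebesgue S g \<longleftrightarrow> integrable (MS S) g"
proof -
  have "S \<inter> space lebesgue \<in> sets lebesgue" using shape_sets'[OF assms] .
  from integrable_restrict_space[OF this, of g] show ?thesis
    unfolding set_integrable_def by simp
qed

lemma shape_avg: "shape S \<Longrightarrow> avg S g = av (MS S) g"
  using shape_sets[of S] shape_measure[of S]
  unfolding avg_def av_def set_lebesgue_integral_def
  by (simp add: integral_restrict_space)

lemma shape_osc: "shape S \<Longrightarrow> osc p S g = nrm (MS S) p (\<lambda>x. g x - av (MS S) g)"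
  using shape_sets[of S] shape_measure[of S]
  unfolding osc_def nrm_def pm_def av_def set_lebesgue_integral_def
  by (simp add: integral_restrict_space shape_avg[unfolded av_def] shape_measure)

lemma in_BMO_iff:
  assumes B: "basis_of_shapes \<S> \<Omega>"
  shows "in_BMO p \<S> g \<longleftrightarrow> (\<forall>S\<in>\<S>. integrable (MS S) g \<and> Lp (MS S) p (\<lambda>x. g x - av (MS S) g))
     \<and> bdd_above ((\<lambda>S. osc p S g) ` \<S>)"
proof -
  have sh: "S \<in> \<S> \<Longrightarrow> shape S" for S using B by (auto simp: basis_of_shapes_def)
  have "integrable (MS S) g \<Longrightarrow> (\<lambda>x. g x - av (MS S) g) \<in> borel_measurable (MS S)" for S
    by auto
  then show ?thesis
    unfolding in_BMO_def Lp_def using sh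
    by (auto simp: shape_integrable shape_avg)
qed



definition phiT :: "real \<Rightarrow> real \<Rightarrow> real" where "phiT k t = max (- k) (min k t)"

lemma phiT_lip: "\<bar>phiT k a - phiT k b\<bar> \<le> \<bar>a - b\<bar>"
  unfolding phiT_def by (auto simp: max_def min_def)

lemma phiT_cont: "continuous_on UNIV (phiT k)"
  unfolding phiT_def[abs_def] by (intro continuous_intros)

lemma trunc_eq: "0 \<le> k \<Longrightarrow> trunc f k = (\<lambda>x. phiT k (f x))"
  unfolding trunc_def phiT_def by (auto simp: fun_eq_iff max_def min_def)

lemma trunc_eq2: "0 \<le> k \<Longrightarrow> trunc f k = (\<lambda>x. (\<bar>f x + k\<bar> - \<bar>f x + - k\<bar>) / 2)"
  unfolding trunc_def by (auto simp: fun_eq_iff abs_if)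

lemma abs_lip: "\<bar>\<bar>a + d\<bar> - \<bar>b + d\<bar>\<bar> \<le> \<bar>a - b::real\<bar>"
  by arith

lemma nrm1: "nrm M 1 g = av M (\<lambda>x. \<bar>g x\<bar>)"
proof -
  have "av M (\<lambda>x. \<bar>g x\<bar>) = integral\<^sup>L M (\<lambda>x. \<bar>g x\<bar>) / measure M (space M)" by (simp add: av_def)
  moreover have "0 \<le> integral\<^sup>L M (\<lambda>x. \<bar>g x\<bar>) / measure M (space M)" by simp
  ultimately show ?thesis unfolding nrm_def pm_def by simp
qed

context avsp begin

lemma half_diff:
  assumes iu: "integrable M u" and iv: "integrable M v"
    and Lu: "Lp M p (\<lambda>x. u x - av M u)" and Lv: "Lp M p (\<lambda>x. v x - av M v)"
  shows "nrm M p (\<lambda>x. (u x - v x) / 2 - av M (\<lambda>x. (u x - v x) / 2))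
    \<le> (nrm M p (\<lambda>x. u x - av M u) + nrm M p (\<lambda>x. v x - av M v)) / 2"
proof -
  have "av M (\<lambda>x. (u x - v x) / 2) = av M (\<lambda>x. (1/2) * (u x - v x))" by simp
  also have "\<dots> = (1/2) * (av M u - av M v)" using iu iv by (simp only: av_cmult av_diff)
  finally have a: "av M (\<lambda>x. (u x - v x) / 2) = (1/2) * (av M u - av M v)" .
  have e: "(\<lambda>x. (u x - v x) / 2 - av M (\<lambda>x. (u x - v x) / 2))
     = (\<lambda>x. (1/2) * (u x - av M u) + (-1/2) * (v x - av M v))"
    unfolding a by (auto simp: fun_eq_iff field_simps)
  have m: "nrm M p (\<lambda>x. (1/2) * (u x - av M u) + (-1/2) * (v x - av M v))
    \<le> nrm M p (\<lambda>x. (1/2) * (u x - av M u)) + nrm M p (\<lambda>x. (-1/2) * (v x - av M v))"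
    by (rule minkowski[OF Lp_cmult[OF Lu] Lp_cmult[OF Lv]])
  have m2: "nrm M p (\<lambda>x. (1/2) * (u x - av M u)) = (1/2) * nrm M p (\<lambda>x. u x - av M u)"
    using nrm_cmult[of "1/2" "\<lambda>x. u x - av M u"] by simp
  have m3: "nrm M p (\<lambda>x. (-1/2) * (v x - av M v)) = (1/2) * nrm M p (\<lambda>x. v x - av M v)"
    using nrm_cmult[of "-1/2" "\<lambda>x. v x - av M v"] by simp
  show ?thesis unfolding e using m unfolding m2 m3 by simp
qed

lemma osc_lower:
  assumes Lf: "Lp M p f" and LT: "Lp M p g"
  shows "nrm M p (\<lambda>x. f x - av M f) \<le> nrm M p (\<lambda>x. g x - av M g) + 2 * nrm M p (\<lambda>x. f x - g x)"
proof -
  have Lw: "Lp M p (\<lambda>x. f x - g x)" by (rule Lp_diff[OF Lf LT])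
  have aw: "av M (\<lambda>x. f x - g x) = av M f - av M g"
    using Lp_integrable[OF Lf] Lp_integrable[OF LT] by (simp add: av_diff)
  have e: "(\<lambda>x. f x - av M f) = (\<lambda>x. (g x - av M g) + ((f x - g x) - av M (\<lambda>x. f x - g x)))"
    unfolding aw by (auto simp: fun_eq_iff)
  have "nrm M p (\<lambda>x. f x - av M f) \<le> nrm M p (\<lambda>x. g x - av M g) + nrm M p (\<lambda>x. (f x - g x) - av M (\<lambda>x. f x - g x))"
    unfolding e by (rule minkowski[OF Lp_diff[OF LT Lp_const] Lp_diff[OF Lw Lp_const]])
  also have "\<dots> \<le> nrm M p (\<lambda>x. g x - av M g) + 2 * nrm M p (\<lambda>x. f x - g x)"
    using nrm_osc_le2[OF Lw] by simp
  finally show ?thesis .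
qed

end

lemma basis_shape: "basis_of_shapes \<S> \<Omega> \<Longrightarrow> S \<in> \<S> \<Longrightarrow> shape S"
  by (auto simp: basis_of_shapes_def)

lemma osc_nonneg: "0 \<le> osc p S g"
  by (simp add: osc_def)

lemma BMO_upper: "in_BMO p \<S> g \<Longrightarrow> S \<in> \<S> \<Longrightarrow> osc p S g \<le> BMO_norm p \<S> g"
  unfolding BMO_norm_def in_BMO_def by (auto intro: cSUP_upper)

lemma BMO_nonneg: "\<S> \<noteq> {} \<Longrightarrow> in_BMO p \<S> g \<Longrightarrow> 0 \<le> BMO_norm p \<S> g"
  using BMO_upper osc_nonneg by (metis all_not_in_conv order_trans)

lemma BMO_least: "\<S> \<noteq> {} \<Longrightarrow> (\<And>S. S \<in> \<S> \<Longrightarrow> osc p S g \<le> B) \<Longrightarrow> BMO_norm p \<S> g \<le> B"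
  unfolding BMO_norm_def by (rule cSUP_least)

lemma lip_BMO:
  assumes B: "basis_of_shapes \<S> \<Omega>" and p: "1 \<le> p" and f: "in_BMO p \<S> f"
    and \<phi>: "\<And>a b. \<bar>\<phi> a - \<phi> b\<bar> \<le> \<bar>a - b\<bar>" and \<phi>c: "continuous_on UNIV \<phi>"
  shows "in_BMO p \<S> (\<lambda>x. \<phi> (f x))" and "\<And>S. S \<in> \<S> \<Longrightarrow> osc p S (\<lambda>x. \<phi> (f x)) \<le> 2 * osc p S f"
proof -
  have *: "integrable (MS S) (\<lambda>x. \<phi> (f x)) \<and> Lp (MS S) p (\<lambda>x. \<phi> (f x) - av (MS S) (\<lambda>x. \<phi> (f x)))
     \<and> osc p S (\<lambda>x. \<phi> (f x)) \<le> 2 * osc p S f" if S: "S \<in> \<S>" for S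
  proof -
    have sh: "shape S" using basis_shape[OF B S] .
    interpret avsp "MS S" p by (rule shape_avsp[OF sh p])
    have fi: "integrable (MS S) f" "Lp (MS S) p (\<lambda>x. f x - av (MS S) f)"
      using f S unfolding in_BMO_iff[OF B] by auto
    show ?thesis using lip_osc[OF fi \<phi> \<phi>c] unfolding shape_osc[OF sh] by auto
  qed
  then show "\<And>S. S \<in> \<S> \<Longrightarrow> osc p S (\<lambda>x. \<phi> (f x)) \<le> 2 * osc p S f" by blast
  have "bdd_above ((\<lambda>S. osc p S (\<lambda>x. \<phi> (f x))) ` \<S>)"
  proof (rule bdd_aboveI2)
    fix S assume "S \<in> \<S>"
    then show "osc p S (\<lambda>x. \<phi> (f x)) \<le> 2 * BMO_norm p \<S> f"
      using *[of S] BMO_upper[OF f, of S] by linarith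
  qed
  then show "in_BMO p \<S> (\<lambda>x. \<phi> (f x))"
    unfolding in_BMO_iff[OF B] using * by blast
qed



lemma shift_BMO:
  assumes B: "basis_of_shapes \<S> \<Omega>" and p: "1 \<le> p" and f: "in_BMO p \<S> f"
  shows "in_BMO p \<S> (\<lambda>x. f x + d)" and "BMO_norm p \<S> (\<lambda>x. f x + d) = BMO_norm p \<S> f"
proof -
  have *: "integrable (MS S) (\<lambda>x. f x + d) \<and> Lp (MS S) p (\<lambda>x. f x + d - av (MS S) (\<lambda>x. f x + d))
     \<and> osc p S (\<lambda>x. f x + d) = osc p S f" if S: "S \<in> \<S>" for S
  proof -
    have sh: "shape S" using basis_shape[OF B S] .
    interpret avsp "MS S" p by (rule shape_avsp[OF sh p])
    have fi: "integrable (MS S) f" "Lp (MS S) p (\<lambda>x. f x - av (MS S) f)"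
      using f S unfolding in_BMO_iff[OF B] by auto
    have e: "(\<lambda>x. f x + d - av (MS S) (\<lambda>x. f x + d)) = (\<lambda>x. f x - av (MS S) f)"
      using fi(1) by (simp add: av_add)
    show ?thesis unfolding shape_osc[OF sh] e using fi by auto
  qed
  have "bdd_above ((\<lambda>S. osc p S (\<lambda>x. f x + d)) ` \<S>)"
    using f * unfolding in_BMO_def by (simp cong: image_cong)
  then show "in_BMO p \<S> (\<lambda>x. f x + d)"
    unfolding in_BMO_iff[OF B] using * by blast
  show "BMO_norm p \<S> (\<lambda>x. f x + d) = BMO_norm p \<S> f"
    unfolding BMO_norm_def using * by (simp cong: SUP_cong)
qed

lemma abs_BMO:
  assumes B: "basis_of_shapes \<S> \<Omega>" and p: "1 \<le> p" and ne: "\<S> \<noteq> {}" and g: "in_BMO p \<S> g"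
  shows "in_BMO p \<S> (\<lambda>x. \<bar>g x\<bar>) \<and> BMO_norm p \<S> (\<lambda>x. \<bar>g x\<bar>) \<le> 2 * BMO_norm p \<S> g"
proof -
  have l: "\<bar>\<bar>a\<bar> - \<bar>b\<bar>\<bar> \<le> \<bar>a - b\<bar>" for a b :: real by arith
  have c: "continuous_on UNIV (abs :: real \<Rightarrow> real)" by (intro continuous_intros)
  note L = lip_BMO[OF B p g, of abs, OF l c]
  have "BMO_norm p \<S> (\<lambda>x. \<bar>g x\<bar>) \<le> 2 * BMO_norm p \<S> g"
    using L(2) BMO_upper[OF g] by (intro BMO_least[OF ne]) (meson mult_left_mono order_trans zero_le_numeral)
  then show ?thesis using L(1) by simp
qed

lemma c_abs_bound:
  assumes B: "basis_of_shapes \<S> \<Omega>" and p: "1 \<le> p" and ne: "\<S> \<noteq> {}" and f: "in_BMO p \<S> f"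
    and pos: "0 < BMO_norm p \<S> f"
  shows "BMO_norm p \<S> (\<lambda>x. \<bar>f x + d\<bar>) \<le> c_abs p \<S> * BMO_norm p \<S> f"
proof -
  define C where "C = {c. \<forall>f. in_BMO p \<S> f \<longrightarrow>
       in_BMO p \<S> (\<lambda>x. \<bar>f x\<bar>) \<and> BMO_norm p \<S> (\<lambda>x. \<bar>f x\<bar>) \<le> c * BMO_norm p \<S> f}"
  have "2 \<in> C" unfolding C_def using abs_BMO[OF B p ne] by blast
  then have Cne: "C \<noteq> {}" by blast
  note g = shift_BMO[OF B p f, of d]
  have "BMO_norm p \<S> (\<lambda>x. \<bar>f x + d\<bar>) / BMO_norm p \<S> f \<le> Inf C"
  proof (rule cInf_greatest[OF Cne])
    fix c assume "c \<in> C"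
    then have "BMO_norm p \<S> (\<lambda>x. \<bar>f x + d\<bar>) \<le> c * BMO_norm p \<S> f"
      unfolding C_def using g by auto
    then show "BMO_norm p \<S> (\<lambda>x. \<bar>f x + d\<bar>) / BMO_norm p \<S> f \<le> c"
      using pos by (simp add: divide_le_eq)
  qed
  then show ?thesis using pos unfolding c_abs_def C_def[symmetric] by (simp add: divide_le_eq)
qed



lemma T_local:
  assumes B: "basis_of_shapes \<S> \<Omega>" and p: "1 \<le> p" and f: "in_BMO p \<S> f"
    and S: "S \<in> \<S>" and k: "0 \<le> k"
  shows "Lp (MS S) p (trunc f k)" "Lp (MS S) p f"
    "integrable (MS S) f" "Lp (MS S) p (\<lambda>x. f x - av (MS S) f)"
proof -
  have sh: "shape S" using basis_shape[OF B S] .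
  interpret avsp "MS S" p by (rule shape_avsp[OF sh p])
  show fi: "integrable (MS S) f" "Lp (MS S) p (\<lambda>x. f x - av (MS S) f)"
    using f S unfolding in_BMO_iff[OF B] by auto
  note L = lip_osc[OF fi phiT_lip phiT_cont, of k]
  show "Lp (MS S) p (trunc f k)" unfolding trunc_eq[OF k] by (rule Lp_of_osc[OF L(1,2)])
  show "Lp (MS S) p f" by (rule Lp_of_osc[OF fi])
qed

lemma T_le1:
  assumes B: "basis_of_shapes \<S> \<Omega>" and p12: "p = 1 \<or> p = 2" and f: "in_BMO p \<S> f"
    and S: "S \<in> \<S>" and k: "0 \<le> k"
  shows "osc p S (trunc f k) \<le> osc p S f"
proof -
  have p: "1 \<le> p" using p12 by auto
  have sh: "shape S" using basis_shape[OF B S] .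
  interpret avsp "MS S" p by (rule shape_avsp[OF sh p])
  have fi: "integrable (MS S) f" "Lp (MS S) p (\<lambda>x. f x - av (MS S) f)"
    using f S unfolding in_BMO_iff[OF B] by auto
  show ?thesis
  proof (cases "p = 1")
    case True
    show ?thesis unfolding shape_osc[OF sh] True nrm1 by (rule osc1_trunc[OF fi(1) k])
  next
    case False
    then have p2: "p = 2" using p12 by auto
    show ?thesis unfolding shape_osc[OF sh] trunc_eq[OF k]
      by (rule lip2[OF p2 fi phiT_lip phiT_cont])
  qed
qed

lemma T_lec:
  assumes B: "basis_of_shapes \<S> \<Omega>" and p: "1 \<le> p" and ne: "\<S> \<noteq> {}" and f: "in_BMO p \<S> f"
    and Npos: "0 < BMO_norm p \<S> f" and k: "0 \<le> k"
  shows "BMO_norm p \<S> (trunc f k) \<le> c_abs p \<S> * BMO_norm p \<S> f"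
proof (rule BMO_least[OF ne])
  fix S assume S: "S \<in> \<S>"
  have sh: "shape S" using basis_shape[OF B S] .
  interpret avsp "MS S" p by (rule shape_avsp[OF sh p])
  have cont: "continuous_on UNIV (\<lambda>t::real. \<bar>t + d\<bar>)" for d by (intro continuous_intros)
  have lu: "in_BMO p \<S> (\<lambda>x. \<bar>f x + d\<bar>)" for d
    using lip_BMO[OF B p f, of "\<lambda>t. \<bar>t + d\<bar>", OF abs_lip cont] by simp
  have ui: "integrable (MS S) (\<lambda>x. \<bar>f x + d\<bar>)"
    "Lp (MS S) p (\<lambda>x. \<bar>f x + d\<bar> - av (MS S) (\<lambda>x. \<bar>f x + d\<bar>))" for d
    using lu[of d] S unfolding in_BMO_iff[OF B] by auto
  have "osc p S (trunc f k) \<le> (osc p S (\<lambda>x. \<bar>f x + k\<bar>) + osc p S (\<lambda>x. \<bar>f x + - k\<bar>)) / 2"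
    unfolding trunc_eq2[OF k] shape_osc[OF sh] by (rule half_diff[OF ui(1) ui(1) ui(2) ui(2)])
  also have "\<dots> \<le> (c_abs p \<S> * BMO_norm p \<S> f + c_abs p \<S> * BMO_norm p \<S> f) / 2"
    using divide_right_mono[OF add_mono[OF order_trans[OF BMO_upper[OF lu S] c_abs_bound[OF B p ne f Npos, of k]]
       order_trans[OF BMO_upper[OF lu S] c_abs_bound[OF B p ne f Npos, of "- k"]]], of 2]
    by simp
  finally show "osc p S (trunc f k) \<le> c_abs p \<S> * BMO_norm p \<S> f" by simp
qed

lemma T_lower:
  assumes B: "basis_of_shapes \<S> \<Omega>" and p: "1 \<le> p" and f: "in_BMO p \<S> f"
    and S: "S \<in> \<S>" and k: "0 \<le> k"
  shows "osc p S f \<le> osc p S (trunc f k) + 2 * nrm (MS S) p (\<lambda>x. f x - trunc f k x)"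
proof -
  have sh: "shape S" using basis_shape[OF B S] .
  interpret avsp "MS S" p by (rule shape_avsp[OF sh p])
  note T = T_local[OF B p f S k]
  show ?thesis unfolding shape_osc[OF sh] by (rule osc_lower[OF T(2) T(1)])
qed

lemma T_tendsto:
  assumes B: "basis_of_shapes \<S> \<Omega>" and p: "1 \<le> p" and f: "in_BMO p \<S> f"
    and S: "S \<in> \<S>"
  shows "((\<lambda>k. nrm (MS S) p (\<lambda>x. f x - trunc f k x)) \<longlongrightarrow> 0) at_top"
proof -
  have sh: "shape S" using basis_shape[OF B S] .
  interpret avsp "MS S" p by (rule shape_avsp[OF sh p])
  note T = T_local[OF B p f S order_refl]
  show ?thesis by (rule trunc_tendsto[OF T(2)])
qed



lemma arith3: "(x::real) \<le> y + 2 * n \<Longrightarrow> y \<le> N \<Longrightarrow> n < (x - a) / 2 \<Longrightarrow> a < N"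
  by (simp add: field_simps)

theorem corollary6p5:
  fixes \<Omega> :: "'a::euclidean_space set" and \<S> :: "'a set set"
    and p :: real and f :: "'a \<Rightarrow> real"
  assumes "domain \<Omega>" and "basis_of_shapes \<S> \<Omega>" and "1 \<le> p"
    and "in_BMO p \<S> f"
  shows "(\<forall>k>0. in_BMO p \<S> (trunc f k) \<and>
            BMO_norm p \<S> (trunc f k) \<le>
              (if p = 1 \<or> p = 2 then 1 else min 2 (((1 + c_abs p \<S>) / 2) ^ 2))
                * BMO_norm p \<S> f)
       \<and> ((p = 1 \<or> p = 2) \<longrightarrow>
            ((\<lambda>k. BMO_norm p \<S> (trunc f k)) \<longlongrightarrow> BMO_norm p \<S> f) at_top)"
proof -
  note D = assms(1) and B = assms(2) and p = assms(3) and f = assms(4)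
  have ne: "\<S> \<noteq> {}" using D B by (auto simp: domain_def basis_of_shapes_def)
  have Nf0: "0 \<le> BMO_norm p \<S> f" by (rule BMO_nonneg[OF ne f])
  have inT: "in_BMO p \<S> (trunc f k)" if k: "0 \<le> k" for k
    using lip_BMO(1)[OF B p f phiT_lip phiT_cont, of k] unfolding trunc_eq[OF k] .
  have two: "BMO_norm p \<S> (trunc f k) \<le> 2 * BMO_norm p \<S> f" if k: "0 \<le> k" for k
  proof (rule BMO_least[OF ne])
    fix S assume S: "S \<in> \<S>"
    have "osc p S (trunc f k) \<le> 2 * osc p S f"
      using lip_BMO(2)[OF B p f phiT_lip phiT_cont S, of k] unfolding trunc_eq[OF k] .
    also have "\<dots> \<le> 2 * BMO_norm p \<S> f" using BMO_upper[OF f S] by simp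
    finally show "osc p S (trunc f k) \<le> 2 * BMO_norm p \<S> f" .
  qed
  have one: "BMO_norm p \<S> (trunc f k) \<le> BMO_norm p \<S> f" if k: "0 \<le> k" and p12: "p = 1 \<or> p = 2" for k
  proof (rule BMO_least[OF ne])
    fix S assume S: "S \<in> \<S>"
    show "osc p S (trunc f k) \<le> BMO_norm p \<S> f"
      using T_le1[OF B p12 f S k] BMO_upper[OF f S] by linarith
  qed
  have part1: "\<forall>k>0. in_BMO p \<S> (trunc f k) \<and>
            BMO_norm p \<S> (trunc f k) \<le>
              (if p = 1 \<or> p = 2 then 1 else min 2 (((1 + c_abs p \<S>) / 2) ^ 2))
                * BMO_norm p \<S> f"
  proof (intro allI impI conjI)
    fix k :: real assume k: "0 < k"
    then have k0: "0 \<le> k" by simp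
    show "in_BMO p \<S> (trunc f k)" by (rule inT[OF k0])
    show "BMO_norm p \<S> (trunc f k) \<le>
              (if p = 1 \<or> p = 2 then 1 else min 2 (((1 + c_abs p \<S>) / 2) ^ 2))
                * BMO_norm p \<S> f"
    proof (cases "p = 1 \<or> p = 2")
      case True
      then show ?thesis using one[OF k0 True] by simp
    next
      case False
      define c where "c = c_abs p \<S>"
      have cc: "c \<le> ((1 + c) / 2) ^ 2"
      proof -
        have "((1 + c) / 2) ^ 2 - c = ((c - 1) / 2) ^ 2" by (simp add: power2_eq_square field_simps)
        moreover have "0 \<le> ((c - 1) / 2) ^ 2" by simp
        ultimately show ?thesis by linarith
      qed
      have "BMO_norm p \<S> (trunc f k) \<le> min 2 (((1 + c) / 2) ^ 2) * BMO_norm p \<S> f"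
      proof (cases "BMO_norm p \<S> f = 0")
        case True
        then show ?thesis using two[OF k0] by simp
      next
        case False
        then have Npos: "0 < BMO_norm p \<S> f" using Nf0 by simp
        have "BMO_norm p \<S> (trunc f k) \<le> c * BMO_norm p \<S> f"
          unfolding c_def by (rule T_lec[OF B p ne f Npos k0])
        also have "\<dots> \<le> ((1 + c) / 2) ^ 2 * BMO_norm p \<S> f"
          using cc Nf0 by (intro mult_right_mono) auto
        finally have a: "BMO_norm p \<S> (trunc f k) \<le> ((1 + c) / 2) ^ 2 * BMO_norm p \<S> f" .
        show ?thesis using a two[OF k0] by (cases "2 \<le> ((1 + c) / 2) ^ 2") (auto simp: min_def)
      qed
      then show ?thesis using False by (simp add: c_def)
    qed
  qed
  have part2: "((\<lambda>k. BMO_norm p \<S> (trunc f k)) \<longlongrightarrow> BMO_norm p \<S> f) at_top"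
    if p12: "p = 1 \<or> p = 2"
  proof (rule order_tendstoI)
    fix a assume a: "BMO_norm p \<S> f < a"
    show "\<forall>\<^sub>F k in at_top. BMO_norm p \<S> (trunc f k) < a"
      using eventually_ge_at_top[of "0::real"]
      by eventually_elim (use one[OF _ p12] a in fastforce)
  next
    fix a assume a: "a < BMO_norm p \<S> f"
    have bdd: "bdd_above ((\<lambda>S. osc p S f) ` \<S>)" using f by (simp add: in_BMO_def)
    obtain S where S: "S \<in> \<S>" and aS: "a < osc p S f"
      using a unfolding BMO_norm_def less_cSUP_iff[OF ne bdd] by blast
    have "\<forall>\<^sub>F k in at_top. nrm (MS S) p (\<lambda>x. f x - trunc f k x) < (osc p S f - a) / 2"
      by (rule order_tendstoD(2)[OF T_tendsto[OF B p f S]]) (use aS in simp)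
    then have ev: "\<forall>\<^sub>F k in at_top. nrm (MS S) p (\<lambda>x. f x - trunc f k x) < (osc p S f - a) / 2 \<and> 0 \<le> k"
      using eventually_ge_at_top[of "0::real"] by (rule eventually_conj)
    show "\<forall>\<^sub>F k in at_top. a < BMO_norm p \<S> (trunc f k)"
    proof (rule eventually_mono[OF ev])
      fix k :: real
      assume h: "nrm (MS S) p (\<lambda>x. f x - trunc f k x) < (osc p S f - a) / 2 \<and> 0 \<le> k"
      have 1: "osc p S f \<le> osc p S (trunc f k) + 2 * nrm (MS S) p (\<lambda>x. f x - trunc f k x)"
        using h T_lower[OF B p f S] by blast
      have 2: "osc p S (trunc f k) \<le> BMO_norm p \<S> (trunc f k)"
        using h BMO_upper[OF inT S] by blast
      show "a < BMO_norm p \<S> (trunc f k)" by (rule arith3[OF 1 2 conjunct1[OF h]])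
    qed
  qed
  show ?thesis using part1 part2 by blast
qed


end
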